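(* Let $n\in\mathbb{Z}$ with $|n|\geq 1$, $\alpha>0$, $R>0$ and $\kappa\in\mathbb{R}$. Suppose $u$ is a nontrivial solution of the $n$-vortex equation $$(ru_r)_r-\frac{n^2}{r}u+\frac{2ru^3}{1+\alpha u^2}-2\kappa ru=0\ \text{ on } (0,R),\qquad u(0)=0,\quad u(R)=0,$$ which has finite energy, i.e. $\mathcal{E}(u)<\infty$. Then $$\kappa<\alpha^{-1}-\frac{r_0^2+n^2}{2R^2},$$ where $r_0\approx 2.404825$ is the first positive zero of the Bessel function $J_0$.
   Context: The energy functional is $\mathcal{E}(u)=\frac12\int_0^R\left\{ru_r^2+\frac{1}{r}u^2+r\ln(1+\alpha u^2)\right\}dr$, where $u=u(r)$ is a real-valued function on $[0,R]$ and $u_r=du/dr$. *)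

theory Defs
  imports "HOL-Analysis.Analysis"
begin

definition bessel_J0 :: "real \<Rightarrow> real" where
  "bessel_J0 x = (\<Sum>k. (-1) ^ k * (x / 2) ^ (2 * k) / (fact k)^2)"

definition bessel_J0_first_zero :: real where
  "bessel_J0_first_zero = Inf {x. 0 < x \<and> bessel_J0 x = 0}"

text \<open>Energy integrand of the functional E(u) (with derivative du of u).\<close>
definition energy_density :: "real \<Rightarrow> (real \<Rightarrow> real) \<Rightarrow> (real \<Rightarrow> real) \<Rightarrow> real \<Rightarrow> real" where
  "energy_density \<alpha> u du r = r * (du r)^2 + (u r)^2 / r + r * ln (1 + \<alpha> * (u r)^2)"

end

theory Submission
  imports Defs
begin

lemma J0_term: "(-1)^k * (x/2)^(2*k) / (fact k)^2 = ((-1)^k / (fact k)^2) * ((x/2::real)^2)^k"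
  by (simp add: power_mult)

lemma J0_alt: "bessel_J0 x = (\<Sum>k. ((-1)^k / (fact k)^2) * ((x/2)^2)^k)"
  unfolding bessel_J0_def J0_term ..

lemma J0_coef_summable: "summable (\<lambda>k. ((-1)^k / (fact k)^2) * (K::real)^k)"
proof -
  have bnd: "norm (((-1)^k / (fact k)^2) * K^k) \<le> \<bar>K\<bar>^k / fact k" for k :: nat
  proof -
  have f1: "(1::real) \<le> fact k" by simp
  have "norm (((-1)^k / (fact k)^2) * K^k) = \<bar>K\<bar>^k / (fact k)^2"
    by (simp add: abs_mult power_abs)
  also have "\<dots> \<le> \<bar>K\<bar>^k / fact k"
    using f1 by (intro divide_left_mono) (auto simp: power2_eq_square)
  finally show "norm (((-1)^k / (fact k)^2) * K^k) \<le> \<bar>K\<bar>^k / fact k" .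
  qed
  have "summable (\<lambda>k. \<bar>K\<bar>^k / fact k)"
    using summable_exp[of "\<bar>K\<bar>"] by (simp add: divide_inverse mult.commute)
  then show ?thesis by (rule summable_comparison_test'[OF _ bnd])
qed

lemma J0_cont: "isCont bessel_J0 x"
proof -
  have "isCont (\<lambda>y. \<Sum>k. ((-1)^k / (fact k)^2) * y^k) ((x/2)^2)"
    by (rule isCont_powser[OF J0_coef_summable[of "(x/2)^2 + 1"]]) auto
  then have "isCont (\<lambda>x. (\<Sum>k. ((-1)^k / (fact k)^2) * ((x/2)^2)^k)) x"
    by (rule isCont_o2[rotated]) (intro continuous_intros; simp)
  then show ?thesis unfolding J0_alt[abs_def] .
qed

lemma J0_0: "bessel_J0 0 = 1"
proof -
  have z: "(0/2::real)^2 = 0" by simp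
  show ?thesis unfolding J0_alt z powser_zero by simp
qed

lemma J0_52: "bessel_J0 (5/2) < 0"
proof -
  define a where "a k = (25/16::real)^k / (fact k)^2" for k
  have eq: "bessel_J0 (5/2) = (\<Sum>k. (-1)^k * a k)"
    unfolding J0_alt a_def by (simp add: power2_eq_square)
  have summ: "summable (\<lambda>k. (-1)^k * a k)"
    using J0_coef_summable[of "25/16"] unfolding a_def by simp
  have a0: "a \<longlonglongrightarrow> 0"
  proof -
    have "(\<lambda>k. (-1)^k * a k) \<longlonglongrightarrow> 0" by (rule summable_LIMSEQ_zero[OF summ])
    then have "(\<lambda>k. \<bar>(-1)^k * a k\<bar>) \<longlonglongrightarrow> 0" by (rule tendsto_rabs_zero)
    moreover have "\<And>k. \<bar>(-1)^k * a k\<bar> = a k" by (simp add: a_def abs_mult)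
    ultimately show ?thesis by simp
  qed
  define b where "b k = a (k + 5)" for k
  have b0: "b \<longlonglongrightarrow> 0" unfolding b_def using a0 by (rule LIMSEQ_ignore_initial_segment)
  have bpos: "\<And>k. 0 \<le> b k" by (simp add: b_def a_def)
  have bmono: "\<And>k. b (Suc k) \<le> b k"
  proof -
    fix k
    have aS: "a (Suc n) = a n * ((25/16) / (real (Suc n))^2)" for n
      unfolding a_def fact_Suc by (simp add: power2_eq_square field_simps)
    have "b (Suc k) = a (Suc (k+5))" by (simp add: b_def)
    also have "\<dots> = b k * ((25/16) / (real (Suc (k+5)))^2)" unfolding aS b_def ..
    finally have "b (Suc k) = b k * ((25/16) / (real (Suc (k+5)))^2)" .
    also have "\<dots> \<le> b k * 1"
    proof (rule mult_left_mono[OF _ bpos])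
      have "(6::real) \<le> real (Suc (k+5))" by simp
      then have "6^2 \<le> (real (Suc (k+5)))^2" by (rule power_mono) simp
      then show "(25/16) / (real (Suc (k+5)))^2 \<le> 1" by simp
    qed
    finally show "b (Suc k) \<le> b k" by simp
  qed
  have tail: "0 \<le> (\<Sum>k. (-1)^k * b k)"
    using summable_Leibniz'(2)[OF b0 bpos bmono, of 0] by simp
  have split: "(\<Sum>k. (-1)^k * a k) = (\<Sum>k. (-1)^(k+5) * a (k+5)) + (\<Sum>k<5. (-1)^k * a k)"
    by (rule suminf_split_initial_segment[OF summ])
  have t2: "(\<Sum>k. (-1)^(k+5) * a (k+5)) = - (\<Sum>k. (-1)^k * b k)"
    using suminf_minus[OF summable_Leibniz'(1)[OF b0 bpos bmono]] unfolding b_def by (simp add: power_add)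
  have fin: "(\<Sum>k<5. (-1)^k * a k) < 0"
    by (simp add: a_def numeral_eq_Suc fact_numeral)
  show ?thesis using eq split t2 tail fin by linarith
qed
lemma poly_ineq:
  fixes t N L :: real
  assumes "0 \<le> t" "t \<le> 1" "N \<ge> 1" "0 \<le> L" "L \<le> 25/4"
  shows "(N - (L+N) * t) * (1 - 9/10 * t) + 18/5*t > 0"
proof -
  have e: "(N - (L+N) * t) * (1 - 9/10 * t) = N * ((1-t) * (1 - 9/10 * t)) - L * (t * (1 - 9/10 * t))"
    by (simp add: field_simps)
  have p1: "0 \<le> (1-t) * (1 - 9/10 * t)" using assms by simp
  have p2: "0 \<le> t * (1 - 9/10 * t)" using assms by simp
  have "N * ((1-t) * (1 - 9/10 * t)) \<ge> 1 * ((1-t) * (1 - 9/10 * t))"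
    using p1 assms by (intro mult_right_mono) auto
  moreover have "L * (t * (1 - 9/10 * t)) \<le> 25/4 * (t * (1 - 9/10 * t))"
    using p2 assms by (intro mult_right_mono) auto
  moreover have "(1-t) * (1 - 9/10 * t) - 25/4 * (t * (1 - 9/10 * t)) + 18/5*t > 0"
  proof -
    have "(1-t) * (1 - 9/10 * t) - 25/4 * (t * (1 - 9/10 * t)) + 18/5*t
        = 261/40 * (t - 91/261)^2 + 2159/10440"
      by (simp add: power2_eq_square field_simps)
    moreover have "0 \<le> 261/40 * (t - 91/261)^2" by simp
    ultimately show ?thesis by linarith
  qed
  ultimately show ?thesis using e by linarith
qed

lemma sturm:
  fixes v dv :: "real \<Rightarrow> real" and N \<alpha> R \<kappa> L r1 :: real
  assumes hR: "R > 0" and h\<alpha>: "\<alpha> > 0" and hN: "N \<ge> 1" and hL0: "0 \<le> L" and hL: "L \<le> 25/4"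
    and hk: "\<kappa> \<ge> 1/\<alpha> - (L + N) / (2 * R^2)"
    and hcont: "continuous_on {0..R} v"
    and hderiv: "\<forall>r\<in>{0<..<R}. (v has_real_derivative dv r) (at r)"
    and hode: "\<forall>r\<in>{0<..<R}. ((\<lambda>x. x * dv x) has_real_derivative
                 N / r * v r - 2 * r * (v r)^3 / (1 + \<alpha> * (v r)^2) + 2 * \<kappa> * r * v r) (at r)"
    and hv0: "v 0 = 0" and hvR: "v R = 0" and hr1: "r1 \<in> {0<..<R}" and hpos: "v r1 > 0"
  shows False
proof -
  define \<phi> where "\<phi> r = 1 - 9/10 * r^2 / R^2" for r
  define \<phi>' where "\<phi>' r = - 9/5 * r / R^2" for r
  define \<psi> where "\<psi> r = - 9/5 * r^2 / R^2" for r
  define \<psi>' where "\<psi>' r = - 18/5 * r / R^2" for r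
  define P where "P r = r * dv r" for r
  define D where "D r = N / r * v r - 2 * r * (v r)^3 / (1 + \<alpha> * (v r)^2) + 2 * \<kappa> * r * v r" for r
  define W where "W r = P r * \<phi> r - v r * \<psi> r" for r
  define W' where "W' r = D r * \<phi> r + \<phi>' r * P r - (dv r * \<psi> r + \<psi>' r * v r)" for r
  define g where "g r = v r / \<phi> r" for r
  define g' where "g' r = (dv r * \<phi> r - v r * \<phi>' r) / (\<phi> r * \<phi> r)" for r
  have R2: "R^2 > 0" using hR by simp
  have phipos: "\<phi> r > 0" if "0 \<le> r" "r \<le> R" for r
  proof -
    have "r^2 \<le> R^2" using that by (intro power_mono) auto
    then have "r^2 / R^2 \<le> 1" using R2 by simp
    then show ?thesis unfolding \<phi>_def by simp
  qed
  have dphi: "(\<phi> has_real_derivative \<phi>' r) (at r)" for r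
    using hR unfolding \<phi>_def[abs_def] \<phi>'_def by (auto intro!: derivative_eq_intros simp: field_simps power2_eq_square)
  have dpsi: "(\<psi> has_real_derivative \<psi>' r) (at r)" for r
    using hR unfolding \<psi>_def[abs_def] \<psi>'_def by (auto intro!: derivative_eq_intros simp: field_simps power2_eq_square)
  have dP: "(P has_real_derivative D r) (at r)" if "r \<in> {0<..<R}" for r
    using hode that unfolding P_def[abs_def] D_def by blast
  have dv: "(v has_real_derivative dv r) (at r)" if "r \<in> {0<..<R}" for r
    using hderiv that by blast
  have dW: "(W has_real_derivative W' r) (at r)" if "r \<in> {0<..<R}" for r
    unfolding W_def[abs_def] W'_def
    by (intro DERIV_diff DERIV_mult dP dv dphi dpsi that)
  have dg: "(g has_real_derivative g' r) (at r)" if "r \<in> {0<..<R}" for r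
  proof -
    have "\<phi> r \<noteq> 0" using phipos[of r] that by auto
    then show ?thesis unfolding g_def[abs_def] g'_def
      by (intro DERIV_divide dv dphi that)
  qed
  have Wg: "W r = r * (\<phi> r)^2 * g' r" if "r \<in> {0<..<R}" for r
  proof -
    have "\<phi> r \<noteq> 0" using phipos[of r] that by auto
    then show ?thesis unfolding W_def g'_def P_def \<psi>_def \<phi>'_def
      by (simp add: field_simps power2_eq_square)
  qed
  have sign_g': "g' r > 0 \<longleftrightarrow> W r > 0" "g' r < 0 \<longleftrightarrow> W r < 0" if "r \<in> {0<..<R}" for r
  proof -
    have "r * (\<phi> r)^2 > 0" using phipos[of r] that by auto
    then show "g' r > 0 \<longleftrightarrow> W r > 0" "g' r < 0 \<longleftrightarrow> W r < 0" 
      using Wg[OF that] by (simp_all add: zero_less_mult_iff mult_less_0_iff)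
  qed
  have Wpos: "W' r > 0" if r: "r \<in> {0<..<R}" and vr: "v r > 0" for r
  proof -
    have r0: "r > 0" and rR: "r < R" using r by auto
    define q where "q = N / r - 2 * r * (v r)^2 / (1 + \<alpha> * (v r)^2) + 2 * \<kappa> * r"
    have W'eq: "W' r = v r * (q * \<phi> r + 18/5 * r / R^2)"
      unfolding W'_def D_def q_def P_def \<psi>_def \<psi>'_def \<phi>'_def using r0 R2
      by (simp add: field_simps power2_eq_square power3_eq_cube)
    have frac: "(v r)^2 / (1 + \<alpha> * (v r)^2) < 1 / \<alpha>"
      using h\<alpha> by (simp add: field_simps add_pos_nonneg)
    have q1: "q > N / r - 2 * r / \<alpha> + 2 * \<kappa> * r"
    proof -
      have "2 * r * ((v r)^2 / (1 + \<alpha> * (v r)^2)) < 2 * r * (1 / \<alpha>)"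
        using frac r0 by (intro mult_strict_left_mono) auto
      then show ?thesis unfolding q_def by (simp add: field_simps)
    qed
    have q2: "2 * \<kappa> * r \<ge> 2 * r / \<alpha> - (L + N) * r / R^2"
    proof -
      have "2 * r * \<kappa> \<ge> 2 * r * (1/\<alpha> - (L + N) / (2 * R^2))"
        using hk r0 by (intro mult_left_mono) auto
      moreover have "2 * r * (1/\<alpha> - (L + N) / (2 * R^2)) = 2 * r / \<alpha> - (L + N) * r / R^2"
      proof -
        have "2 * r * ((L + N) / (2 * R^2)) = (L + N) * r / R^2" by simp
        then show ?thesis by (simp add: right_diff_distrib)
      qed
      ultimately show ?thesis by (simp add: mult.commute mult.left_commute)
    qed
    have q3: "q > N / r - (L + N) * r / R^2" using q1 q2 by linarith
    have ph: "\<phi> r > 0" using phipos[of r] r by auto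
    have "q * \<phi> r > (N / r - (L + N) * r / R^2) * \<phi> r"
      using q3 ph by (intro mult_strict_right_mono) auto
    moreover have "(N / r - (L + N) * r / R^2) * \<phi> r + 18/5 * r / R^2 > 0"
    proof -
      define t where "t = r^2 / R^2"
      have t0: "0 \<le> t" and t1: "t \<le> 1" unfolding t_def using r R2
        by (auto simp: power_mono)
      have pi: "(N - (L+N) * t) * (1 - 9/10 * t) + 18/5*t > 0"
        by (rule poly_ineq[OF t0 t1 hN hL0 hL])
      have "r * ((N / r - (L + N) * r / R^2) * \<phi> r + 18/5 * r / R^2)
            = (N - (L+N) * t) * (1 - 9/10 * t) + 18/5*t"
        unfolding t_def \<phi>_def using r0 R2 by (simp add: field_simps power2_eq_square)
      with pi have "r * ((N / r - (L + N) * r / R^2) * \<phi> r + 18/5 * r / R^2) > 0" by simp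
      then show ?thesis using r0 by (simp add: zero_less_mult_iff)
    qed
    ultimately have "q * \<phi> r + 18/5 * r / R^2 > 0" by linarith
    then show ?thesis using W'eq vr by simp
  qed
  have r1R: "0 < r1" "r1 < R" using hr1 by auto
  have cont_g: "continuous_on {c..d} g" if "0 \<le> c" "d \<le> R" for c d
  proof -
    have "continuous_on {c..d} v" using that by (intro continuous_on_subset[OF hcont]) auto
    moreover have "continuous_on {c..d} \<phi>" unfolding \<phi>_def using R2 by (intro continuous_intros) auto
    moreover have "\<forall>x\<in>{c..d}. \<phi> x \<noteq> 0" using phipos that by (metis atLeastAtMost_iff less_irrefl order_trans)
    ultimately show ?thesis unfolding g_def[abs_def] by (intro continuous_on_divide)
  qed
  have gpos: "g x > 0" if "v x > 0" "0 \<le> x" "x \<le> R" for x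
    using phipos[OF that(2,3)] that(1) unfolding g_def by simp
  have gnonpos: "g x \<le> 0" if "v x \<le> 0" "0 \<le> x" "x \<le> R" for x
    using phipos[OF that(2,3)] that(1) unfolding g_def by (simp add: divide_nonpos_pos)
  define A where "A = {0..r1} \<inter> v -` {..0}"
  have closedA: "closed A" unfolding A_def
    by (rule continuous_closed_preimage[OF continuous_on_subset[OF hcont]]) (use r1R in auto)
  have A0: "0 \<in> A" unfolding A_def using hv0 r1R by auto
  have bddA: "bdd_above A" unfolding A_def by (rule bdd_aboveI[of _ r1]) auto
  define a where "a = Sup A"
  have aA: "a \<in> A" unfolding a_def using closed_contains_Sup[OF _ bddA closedA] A0 by auto
  have a_props: "0 \<le> a" "a \<le> r1" "v a \<le> 0" using aA unfolding A_def by auto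
  have a_lt: "a < r1" using a_props hpos by (cases "a = r1") auto
  have a_after: "v x > 0" if "a < x" "x \<le> r1" for x
  proof (rule ccontr)
    assume "\<not> v x > 0"
    then have "x \<in> A" unfolding A_def using that a_props by auto
    then have "x \<le> a" unfolding a_def by (rule cSup_upper[OF _ bddA])
    then show False using that by simp
  qed
  define B where "B = {r1..R} \<inter> v -` {..0}"
  have closedB: "closed B" unfolding B_def
    by (rule continuous_closed_preimage[OF continuous_on_subset[OF hcont]]) (use r1R in auto)
  have BR: "R \<in> B" unfolding B_def using hvR r1R by auto
  have bddB: "bdd_below B" unfolding B_def by (rule bdd_belowI[of _ r1]) auto
  define b where "b = Inf B"
  have bB: "b \<in> B" unfolding b_def using closed_contains_Inf[OF _ bddB closedB] BR by auto
  have b_props: "r1 \<le> b" "b \<le> R" "v b \<le> 0" using bB unfolding B_def by auto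
  have b_gt: "r1 < b" using b_props hpos by (cases "b = r1") auto
  have b_before: "v x > 0" if "r1 \<le> x" "x < b" for x
  proof (rule ccontr)
    assume "\<not> v x > 0"
    then have "x \<in> B" unfolding B_def using that b_props by auto
    then have "b \<le> x" unfolding b_def by (rule cInf_lower[OF _ bddB])
    then show False using that by simp
  qed
  have incW: "W x < W y" if "x < y" "\<And>z. x \<le> z \<Longrightarrow> z \<le> y \<Longrightarrow> z \<in> {0<..<R} \<and> v z > 0" for x y
  proof (rule DERIV_pos_imp_increasing[OF that(1)])
    fix z assume "x \<le> z" "z \<le> y"
    then have "z \<in> {0<..<R}" "v z > 0" using that(2) by auto
    then show "\<exists>y. DERIV W z :> y \<and> y > 0" using dW Wpos by blast
  qed
  show False
  proof (cases "W r1 \<ge> 0")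
    case True
    have "g r1 \<le> g b"
    proof (rule DERIV_nonneg_imp_increasing_open[OF less_imp_le[OF b_gt]])
      fix x assume x: "r1 < x" "x < b"
      have xin: "x \<in> {0<..<R}" using x r1R b_props by auto
      have "W r1 < W x"
        by (rule incW[OF x(1)]) (use x r1R b_props b_before in auto)
      then have "W x > 0" using True by linarith
      then have "g' x > 0" using sign_g'(1)[OF xin] by simp
      then show "\<exists>y. DERIV g x :> y \<and> y \<ge> 0" using dg[OF xin] by (intro exI[of _ "g' x"]) auto
    next
      show "continuous_on {r1..b} g" by (rule cont_g) (use r1R b_props in auto)
    qed
    moreover have "g r1 > 0" by (rule gpos) (use hpos r1R in auto)
    moreover have "g b \<le> 0" by (rule gnonpos) (use b_props r1R in auto)
    ultimately show False by linarith
  next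
    case False
    have "g a \<ge> g r1"
    proof (rule DERIV_nonpos_imp_decreasing_open[OF less_imp_le[OF a_lt]])
      fix x assume x: "a < x" "x < r1"
      have xin: "x \<in> {0<..<R}" using x r1R a_props by auto
      have "W x < W r1"
        by (rule incW[OF x(2)]) (use x r1R a_props a_after in auto)
      then have "W x < 0" using False by linarith
      then have "g' x < 0" using sign_g'(2)[OF xin] by simp
      then show "\<exists>y. DERIV g x :> y \<and> y \<le> 0" using dg[OF xin] by (intro exI[of _ "g' x"]) auto
    next
      show "continuous_on {a..r1} g" by (rule cont_g) (use r1R a_props in auto)
    qed
    moreover have "g r1 > 0" by (rule gpos) (use hpos r1R in auto)
    moreover have "g a \<le> 0" by (rule gnonpos) (use a_props r1R in auto)
    ultimately show False by linarith
  qed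
qed

lemma r0_bounds: "0 \<le> bessel_J0_first_zero" "bessel_J0_first_zero \<le> 5/2"
proof -
  define S where "S = {x. 0 < x \<and> bessel_J0 x = 0}"
  have "\<exists>x. 0 \<le> x \<and> x \<le> 5/2 \<and> bessel_J0 x = 0"
    by (rule IVT2) (use J0_52 J0_0 J0_cont in auto)
  then obtain z where z: "0 \<le> z" "z \<le> 5/2" "bessel_J0 z = 0" by blast
  have "z \<noteq> 0" using z J0_0 by auto
  then have zS: "z \<in> S" unfolding S_def using z by auto
  have bdd: "bdd_below S" unfolding S_def by (rule bdd_belowI[of _ 0]) auto
  have "Inf S \<le> z" by (rule cInf_lower[OF zS bdd])
  then show "bessel_J0_first_zero \<le> 5/2" using z unfolding bessel_J0_first_zero_def S_def by simp
  have "0 \<le> Inf S" by (rule cInf_greatest) (use zS S_def in auto)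
  then show "0 \<le> bessel_J0_first_zero" unfolding bessel_J0_first_zero_def S_def by simp
qed

theorem theorem2p1:
  fixes n :: int and \<alpha> R \<kappa> :: real and u du :: "real \<Rightarrow> real"
  assumes hn: "\<bar>n\<bar> \<ge> 1"
    and h\<alpha>: "\<alpha> > 0" and hR: "R > 0"
    and hcont: "continuous_on {0..R} u"
    and hderiv: "\<forall>r\<in>{0<..<R}. (u has_real_derivative du r) (at r)"
    and hode: "\<forall>r\<in>{0<..<R}. ((\<lambda>s. s * du s) has_real_derivative
                 (real_of_int n)^2 / r * u r - 2 * r * (u r)^3 / (1 + \<alpha> * (u r)^2)
                 + 2 * \<kappa> * r * u r) (at r)"
    and hbc: "u 0 = 0" "u R = 0"
    and hnontriv: "\<exists>r\<in>{0<..<R}. u r \<noteq> 0"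
    and hfinite: "energy_density \<alpha> u du integrable_on {0<..<R}"
  shows "\<kappa> < 1 / \<alpha> - (bessel_J0_first_zero^2 + (real_of_int n)^2) / (2 * R^2)"
proof (rule ccontr)
  assume "\<not> ?thesis"
  then have hk: "\<kappa> \<ge> 1 / \<alpha> - (bessel_J0_first_zero^2 + (real_of_int n)^2) / (2 * R^2)" by simp
  have hN: "(real_of_int n)^2 \<ge> 1"
  proof -
    have "1 \<le> \<bar>real_of_int n\<bar>" using hn by linarith
    then have "1 \<le> \<bar>real_of_int n\<bar>^2" by (rule one_le_power)
    then show ?thesis by (metis power2_abs)
  qed
  have hL0: "0 \<le> bessel_J0_first_zero^2" by simp
  have hL: "bessel_J0_first_zero^2 \<le> 25/4"
  proof -
    have "bessel_J0_first_zero^2 \<le> (5/2)^2" by (rule power_mono) (use r0_bounds in auto)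
    then show ?thesis by (simp add: power2_eq_square)
  qed
  obtain r1 where r1: "r1 \<in> {0<..<R}" "u r1 \<noteq> 0" using hnontriv by blast
  show False
  proof (cases "u r1 > 0")
    case True
    show False
      by (rule sturm[OF hR h\<alpha> hN hL0 hL hk hcont hderiv hode hbc r1(1) True])
  next
    case False
    then have pos: "(\<lambda>x. - u x) r1 > 0" using r1 by auto
    have hcont': "continuous_on {0..R} (\<lambda>x. - u x)" by (intro continuous_intros hcont)
    have hderiv': "\<forall>r\<in>{0<..<R}. ((\<lambda>x. - u x) has_real_derivative (\<lambda>x. - du x) r) (at r)"
      using hderiv by (auto intro: DERIV_minus)
    have hode': "\<forall>r\<in>{0<..<R}. ((\<lambda>x. x * (\<lambda>x. - du x) x) has_real_derivative
                 (real_of_int n)^2 / r * (\<lambda>x. - u x) r - 2 * r * ((\<lambda>x. - u x) r)^3 / (1 + \<alpha> * ((\<lambda>x. - u x) r)^2)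
                 + 2 * \<kappa> * r * (\<lambda>x. - u x) r) (at r)"
    proof
      fix r assume rr: "r \<in> {0<..<R}"
      have "((\<lambda>x. - (x * du x)) has_real_derivative
                 - ((real_of_int n)^2 / r * u r - 2 * r * (u r)^3 / (1 + \<alpha> * (u r)^2)
                 + 2 * \<kappa> * r * u r)) (at r)"
        by (rule DERIV_minus) (use hode rr in blast)
      then show "((\<lambda>x. x * (\<lambda>x. - du x) x) has_real_derivative
                 (real_of_int n)^2 / r * (\<lambda>x. - u x) r - 2 * r * ((\<lambda>x. - u x) r)^3 / (1 + \<alpha> * ((\<lambda>x. - u x) r)^2)
                 + 2 * \<kappa> * r * (\<lambda>x. - u x) r) (at r)"
        by (simp add: power3_eq_cube)
    qed
    show False
      by (rule sturm[OF hR h\<alpha> hN hL0 hL hk hcont' hderiv' hode' _ _ r1(1) pos]) (use hbc in auto)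
  qed
qed

end
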